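(* Let $\mathbb{H}$ be a reproducing kernel Hilbert space with inner product $\langle\cdot,\cdot\rangle$ and feature map $\phi$, let $\Sigma:=\operatorname{Var}\phi(X)$, and let $(X,A,Y)$ be jointly distributed with $Y=\langle\phi(X),y\rangle$ and $A=\langle\phi(X),a\rangle$ for some nonzero $y,a\in\mathbb{H}$, with $\operatorname{Var}(Y),\operatorname{Var}(A)>0$; let $\rho_{YA}$ be the correlation coefficient of $Y$ and $A$. Suppose $(X,\phi)$ is regular. Then: (i) there exists a (possibly randomized) representation $Z=g(X)$ with $\operatorname{Var}\mathbb{E}[A\mid Z]=0$ and $\operatorname{Var}\mathbb{E}[Y\mid Z]=\operatorname{Var}(Y)(1-\rho_{YA}^2)$; (ii) there exists a (possibly randomized) representation $Z=g(X)$ with $\operatorname{Var}\mathbb{E}[Y\mid Z]=\operatorname{Var}(Y)$ and $\operatorname{Var}\mathbb{E}[A\mid Z]=\operatorname{Var}(A)\rho_{YA}^2$; (iii) for every $\lambda\ge0$ there exists a (possibly randomized) representation $Z=g(X)$ with $$\lambda\operatorname{Var}\mathbb{E}[A\mid Z]-\operatorname{Var}\mathbb{E}[Y\mid Z]=\frac12\Big\{\lambda\operatorname{Var}(A)-\operatorname{Var}(Y)-\sqrt{\operatorname{Var}^2(Y)+\lambda^2\operatorname{Var}^2(A)-2\lambda\operatorname{Var}(A)\operatorname{Var}(Y)(2\rho_{YA}^2-1)}\Big\}.$$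
   Context: A (possibly randomized) representation is $Z=g(X,S)$ with auxiliary randomness $S$ independent of $(X,A,Y)$. $(X,\phi)$ is called regular if for every positive semidefinite operator $M$ with $0\preceq M\preceq\Sigma$ there exists a (possibly randomized) representation $Z=g(X)$ such that $\operatorname{Var}\mathbb{E}[\phi(X)\mid Z]=M$ (the covariance operator of $\mathbb{E}[\phi(X)\mid Z]$). *)

theory Defs
  imports "HOL-Probability.Probability"
begin

definition cov :: "'a measure \<Rightarrow> ('a \<Rightarrow> real) \<Rightarrow> ('a \<Rightarrow> real) \<Rightarrow> real" where
  "cov M f h = prob_space.expectation M
      (\<lambda>\<omega>. (f \<omega> - prob_space.expectation M f) * (h \<omega> - prob_space.expectation M h))"

definition corr :: "'a measure \<Rightarrow> ('a \<Rightarrow> real) \<Rightarrow> ('a \<Rightarrow> real) \<Rightarrow> real" where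
  "corr M f h = cov M f h / sqrt (prob_space.variance M f * prob_space.variance M h)"

(* A (possibly randomized) representation Z = g(X,S): auxiliary randomness S with values in MSa,
   independent of X (joint law = product of laws; hence of (X,A,Y), as A and Y are functions of X), and a measurable g. *)
definition representation ::
  "'a measure \<Rightarrow> ('a \<Rightarrow> 'x) \<Rightarrow> 'x measure \<Rightarrow> ('a \<Rightarrow> 's) \<Rightarrow> 's measure
     \<Rightarrow> ('x \<times> 's \<Rightarrow> 'z) \<Rightarrow> 'z measure \<Rightarrow> bool" where
  "representation M X MX S MSa g MZa \<longleftrightarrow>
     S \<in> measurable M MSa \<and> g \<in> measurable (MX \<Otimes>\<^sub>M MSa) MZa \<and>
     distr M (MX \<Otimes>\<^sub>M MSa) (\<lambda>\<omega>. (X \<omega>, S \<omega>)) = distr M MX X \<Otimes>\<^sub>M distr M MSa S"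

definition rep_algebra ::
  "'a measure \<Rightarrow> ('a \<Rightarrow> 'x) \<Rightarrow> ('a \<Rightarrow> 's) \<Rightarrow> ('x \<times> 's \<Rightarrow> 'z) \<Rightarrow> 'z measure \<Rightarrow> 'a measure" where
  "rep_algebra M X S g MZa = vimage_algebra (space M) (\<lambda>\<omega>. g (X \<omega>, S \<omega>)) MZa"

definition cexp ::
  "'a measure \<Rightarrow> ('a \<Rightarrow> 'x) \<Rightarrow> ('a \<Rightarrow> 's) \<Rightarrow> ('x \<times> 's \<Rightarrow> 'z) \<Rightarrow> 'z measure
     \<Rightarrow> ('a \<Rightarrow> real) \<Rightarrow> ('a \<Rightarrow> real)" where
  "cexp M X S g MZa f = real_cond_exp M (rep_algebra M X S g MZa) f"

definition var_cexp ::
  "'a measure \<Rightarrow> ('a \<Rightarrow> 'x) \<Rightarrow> ('a \<Rightarrow> 's) \<Rightarrow> ('x \<times> 's \<Rightarrow> 'z) \<Rightarrow> 'z measure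
     \<Rightarrow> ('a \<Rightarrow> real) \<Rightarrow> real" where
  "var_cexp M X S g MZa f = prob_space.variance M (cexp M X S g MZa f)"

(* C is the covariance operator of E[phi(X) | Z]: for all h k,
   <h, C k> = Cov(<E[phi(X)|Z], h>, <E[phi(X)|Z], k>) = Cov(E[<phi(X),h>|Z], E[<phi(X),k>|Z]) *)
definition is_cov_op_cexp ::
  "'a measure \<Rightarrow> ('a \<Rightarrow> 'x) \<Rightarrow> ('x \<Rightarrow> 'h::real_inner) \<Rightarrow> ('a \<Rightarrow> 's) \<Rightarrow> ('x \<times> 's \<Rightarrow> 'z)
     \<Rightarrow> 'z measure \<Rightarrow> ('h \<Rightarrow> 'h) \<Rightarrow> bool" where
  "is_cov_op_cexp M X \<phi> S g MZa C \<longleftrightarrow>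
     (\<forall>h k. inner h (C k) =
        cov M (cexp M X S g MZa (\<lambda>\<omega>. inner (\<phi> (X \<omega>)) h))
              (cexp M X S g MZa (\<lambda>\<omega>. inner (\<phi> (X \<omega>)) k)))"

(* Sigma = Var phi(X), given through its bilinear form <h, Sigma k> = Cov(<phi(X),h>, <phi(X),k>) *)
definition Sigma_form :: "'a measure \<Rightarrow> ('a \<Rightarrow> 'x) \<Rightarrow> ('x \<Rightarrow> 'h::real_inner) \<Rightarrow> 'h \<Rightarrow> 'h \<Rightarrow> real" where
  "Sigma_form M X \<phi> h k = cov M (\<lambda>\<omega>. inner (\<phi> (X \<omega>)) h) (\<lambda>\<omega>. inner (\<phi> (X \<omega>)) k)"

definition psd_below_Sigma :: "'a measure \<Rightarrow> ('a \<Rightarrow> 'x) \<Rightarrow> ('x \<Rightarrow> 'h::real_inner) \<Rightarrow> ('h \<Rightarrow> 'h) \<Rightarrow> bool" where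
  "psd_below_Sigma M X \<phi> C \<longleftrightarrow>
     bounded_linear C \<and> (\<forall>h k. inner h (C k) = inner (C h) k) \<and>
     (\<forall>h. 0 \<le> inner h (C h)) \<and> (\<forall>h. inner h (C h) \<le> Sigma_form M X \<phi> h h)"

definition regular ::
  "'s itself \<Rightarrow> 'z itself \<Rightarrow> 'a measure \<Rightarrow> ('a \<Rightarrow> 'x) \<Rightarrow> 'x measure \<Rightarrow> ('x \<Rightarrow> 'h::real_inner) \<Rightarrow> bool" where
  "regular _ _ M X MX \<phi> \<longleftrightarrow>
     (\<forall>C. psd_below_Sigma M X \<phi> C \<longrightarrow>
        (\<exists>(S::'a \<Rightarrow> 's) MSa (g::'x \<times> 's \<Rightarrow> 'z) MZa.
           representation M X MX S MSa g MZa \<and> is_cov_op_cexp M X \<phi> S g MZa C))"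

(* H is a reproducing kernel Hilbert space on the points of type 'x with feature map phi:
   a Hilbert space realised (injectively; linearity follows from the reproducing property) as real functions on 'x via evl,
   with the reproducing property evl f x = <f, phi x>. *)
definition rkhs_feature :: "('h::{real_inner,complete_space} \<Rightarrow> 'x \<Rightarrow> real) \<Rightarrow> ('x \<Rightarrow> 'h) \<Rightarrow> bool" where
  "rkhs_feature evl \<phi> \<longleftrightarrow> inj evl \<and> (\<forall>f x. evl f x = inner f (\<phi> x))"

end

theory Submission
  imports Defs
begin
lemma parallelogram_norm:
  fixes x y :: "'h::real_inner"
  shows "(norm (x - y))\<^sup>2 = 2 * (norm x)\<^sup>2 + 2 * (norm y)\<^sup>2 - (norm (x + y))\<^sup>2"
  by (simp add: power2_norm_eq_inner inner_add inner_diff inner_commute algebra_simps)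

lemma riesz_repr:
  fixes f :: "'h::{real_inner,complete_space} \<Rightarrow> real"
  assumes bl: "bounded_linear f"
  shows "\<exists>w. \<forall>h. f h = inner h w"
proof (cases "\<forall>h. f h = 0")
  case True then show ?thesis by (intro exI[of _ 0]) simp
next
  case False
  interpret f: bounded_linear f by (rule bl)
  from False obtain x0 where x0: "f x0 \<noteq> 0" by auto
  define S where "S = {h. f h = 1}"
  have x1S: "x0 /\<^sub>R f x0 \<in> S" using x0 by (simp add: S_def f.scale)
  define d where "d = Inf (norm ` S)"
  have bdd: "bdd_below (norm ` S)" by (intro bdd_belowI[of _ 0]) auto
  have dle: "d \<le> norm k" if "k \<in> S" for k
    unfolding d_def using bdd that by (intro cInf_lower) auto
  have d0: "0 \<le> d" unfolding d_def using x1S by (intro cInf_greatest) auto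
  have ex: "\<exists>h. f h = 1 \<and> (norm h)\<^sup>2 < d\<^sup>2 + inverse (real (Suc n))" for n
  proof -
    have "d < sqrt (d\<^sup>2 + inverse (real (Suc n)))"
      by (intro real_less_rsqrt) simp
    then have "Inf (norm ` S) < sqrt (d\<^sup>2 + inverse (real (Suc n)))" by (simp add: d_def)
    then obtain v where "v \<in> norm ` S" "v < sqrt (d\<^sup>2 + inverse (real (Suc n)))"
      using x1S by (subst (asm) cInf_less_iff) (auto simp: bdd)
    then obtain h where h: "h \<in> S" "norm h < sqrt (d\<^sup>2 + inverse (real (Suc n)))" by auto
    have "(norm h)\<^sup>2 < d\<^sup>2 + inverse (real (Suc n))"
    proof -
      have "(norm h)\<^sup>2 < (sqrt (d\<^sup>2 + inverse (real (Suc n))))\<^sup>2"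
        using h(2) by (intro power_strict_mono) auto
      then show ?thesis by simp
    qed
    then show ?thesis using h(1) by (auto simp: S_def)
  qed
  then obtain hs where hs: "\<And>n. f (hs n) = 1" "\<And>n. (norm (hs n))\<^sup>2 < d\<^sup>2 + inverse (real (Suc n))"
    by metis
  have sumS: "norm (k1 + k2) \<ge> 2 * d" if "f k1 = 1" "f k2 = 1" for k1 k2
  proof -
    have "(k1 + k2) /\<^sub>R 2 \<in> S" using that by (simp add: S_def f.scale f.add)
    then have "d \<le> norm ((k1 + k2) /\<^sub>R 2)" by (rule dle)
    then show ?thesis by simp
  qed
  have cd: "(norm (hs n - hs m))\<^sup>2 \<le> 2 * inverse (real (Suc n)) + 2 * inverse (real (Suc m))" for n m
  proof -
    have a: "(2*d)\<^sup>2 \<le> (norm (hs n + hs m))\<^sup>2"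
      using sumS[OF hs(1) hs(1)] d0 by (intro power_mono) auto
    show ?thesis unfolding parallelogram_norm using a hs(2)[of n] hs(2)[of m]
      by (simp add: power_mult_distrib)
  qed
  have "Cauchy hs"
  proof (rule CauchyI)
    fix e :: real assume e: "0 < e"
    obtain M where M: "4 / e\<^sup>2 < real M" using reals_Archimedean2 by blast
    have "4 / e\<^sup>2 * e\<^sup>2 < real M * e\<^sup>2" using M e by (intro mult_strict_right_mono) auto
    then have M2: "4 < real M * e\<^sup>2" using e by simp
    show "\<exists>M. \<forall>m\<ge>M. \<forall>n\<ge>M. norm (hs m - hs n) < e"
    proof (intro exI allI impI)
      fix m n assume mn: "M \<le> m" "M \<le> n"
      have i1: "inverse (real (Suc m)) \<le> inverse (real (Suc M))" using mn by (simp add: field_simps)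
      have i2: "inverse (real (Suc n)) \<le> inverse (real (Suc M))" using mn by (simp add: field_simps)
      have "4 < real (Suc M) * e\<^sup>2" using M2 e
        by (simp add: distrib_right add_pos_pos add.commute add_strict_increasing)
      then have "4 * inverse (real (Suc M)) < e\<^sup>2"
        by (simp add: field_simps)
      then have "(norm (hs m - hs n))\<^sup>2 < e\<^sup>2"
        using cd[of m n] i1 i2 e
        by linarith
      then show "norm (hs m - hs n) < e" using e by (simp add: power2_less_imp_less)
    qed
  qed
  then obtain hstar where lim: "hs \<longlonglongrightarrow> hstar" using Cauchy_convergent_iff convergent_def by blast
  have "(\<lambda>n. f (hs n)) \<longlonglongrightarrow> f hstar" by (rule f.tendsto[OF lim])
  then have fstar: "f hstar = 1" using hs(1) by (simp add: LIMSEQ_const_iff)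
  have "(\<lambda>n. (norm (hs n))\<^sup>2) \<longlonglongrightarrow> (norm hstar)\<^sup>2"
    by (intro tendsto_intros lim)
  moreover have "(\<lambda>n. d\<^sup>2 + inverse (real (Suc n))) \<longlonglongrightarrow> d\<^sup>2 + 0"
    by (intro tendsto_intros LIMSEQ_inverse_real_of_nat)
  ultimately have nstar: "(norm hstar)\<^sup>2 \<le> d\<^sup>2"
    by (intro LIMSEQ_le[of "\<lambda>n. (norm (hs n))\<^sup>2" _ "\<lambda>n. d\<^sup>2 + inverse (real (Suc n))"])
       (use hs(2) less_imp_le in auto)
  have minim: "(norm hstar)\<^sup>2 \<le> (norm k)\<^sup>2" if "f k = 1" for k
  proof -
    have "d \<le> norm k" using that by (intro dle) (simp add: S_def)
    then have "d\<^sup>2 \<le> (norm k)\<^sup>2" using d0 by (intro power_mono) auto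
    then show ?thesis using nstar by linarith
  qed
  have orth: "inner hstar k = 0" if "f k = 0" for k
  proof -
    define c where "c = inner hstar k"
    define n where "n = inner k k"
    have n0: "0 \<le> n" by (simp add: n_def)
    have "\<And>t. 0 \<le> 2 * t * c + t\<^sup>2 * n"
    proof -
      fix t :: real
      have "f (hstar + t *\<^sub>R k) = 1" using that fstar by (simp add: f.add f.scale)
      then have "(norm hstar)\<^sup>2 \<le> (norm (hstar + t *\<^sub>R k))\<^sup>2" by (rule minim)
      moreover have "(norm (hstar + t *\<^sub>R k))\<^sup>2 = (norm hstar)\<^sup>2 + (2 * t * c + t\<^sup>2 * n)"
        unfolding power2_norm_eq_inner
        by (simp add: inner_add inner_commute c_def n_def power2_eq_square algebra_simps)
      ultimately show "0 \<le> 2 * t * c + t\<^sup>2 * n" by linarith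
    qed
    note hq = this
    define t where "t = - c / (n + 1)"
    have tn: "t * (n + 1) = - c" using n0 unfolding t_def by (simp add: field_simps)
    have "0 \<le> (n + 1)\<^sup>2 * (2 * t * c + t\<^sup>2 * n)" using hq[of t] by simp
    also have "(n + 1)\<^sup>2 * (2 * t * c + t\<^sup>2 * n) = 2 * (t * (n + 1)) * c * (n + 1) + (t * (n + 1))\<^sup>2 * n"
      by (simp add: algebra_simps power2_eq_square)
    also have "\<dots> = - 2 * c\<^sup>2 * (n + 1) + c\<^sup>2 * n" unfolding tn by (simp add: power2_eq_square)
    finally have "0 \<le> - 2 * c\<^sup>2 * (n + 1) + c\<^sup>2 * n" .
    then have "c\<^sup>2 * (n + 2) \<le> 0" by (simp add: algebra_simps)
    then have "c\<^sup>2 \<le> 0" using n0 by (simp add: mult_le_0_iff)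
    then show ?thesis by (simp add: c_def)
  qed
  have hne: "hstar \<noteq> 0" using fstar by auto
  show ?thesis
  proof (intro exI allI)
    fix h
    have "f (h - f h *\<^sub>R hstar) = 0" using fstar by (simp add: f.diff f.scale)
    then have "inner hstar (h - f h *\<^sub>R hstar) = 0" by (rule orth)
    then have "inner hstar h = f h * inner hstar hstar" by (simp add: inner_diff)
    then show "f h = inner h (hstar /\<^sub>R (norm hstar)\<^sup>2)"
      using hne by (simp add: power2_norm_eq_inner inner_commute)
  qed
qed

lemma quad_disc:
  fixes a b c :: real
  assumes q: "\<And>t. 0 \<le> a + 2 * b * t + c * t\<^sup>2" and c0: "0 \<le> c"
  shows "b\<^sup>2 \<le> a * c"
proof (cases "c = 0")
  case True
  show ?thesis
  proof (cases "b = 0")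
    case False
    have "2 * b * (- (\<bar>a\<bar> + 1) / (2 * b)) = - (\<bar>a\<bar> + 1)" using False by (simp add: field_simps)
    with q[of "- (\<bar>a\<bar> + 1) / (2 * b)"] True have "0 \<le> a - (\<bar>a\<bar> + 1)" by simp
    then show ?thesis by linarith
  qed (use q[of 0] c0 in simp)
next
  case False
  then have cp: "0 < c" using c0 by simp
  from q[of "- b / c"] have "0 \<le> a + 2 * b * (- b / c) + c * (- b / c)\<^sup>2" .
  also have "a + 2 * b * (- b / c) + c * (- b / c)\<^sup>2 = (a * c - b\<^sup>2) / c"
    using cp by (simp add: field_simps power2_eq_square)
  finally show ?thesis using cp by (simp add: zero_le_divide_iff)
qed

context
  fixes M :: "'a measure" and X :: "'a \<Rightarrow> 'x" and MX :: "'x measure"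
    and \<phi> :: "'x \<Rightarrow> 'h::{real_inner,complete_space}"
  assumes ps: "prob_space M" and Xm: "X \<in> measurable M MX" and phim: "\<phi> \<in> borel_measurable MX"
    and sq: "integrable M (\<lambda>\<omega>. (norm (\<phi> (X \<omega>)))\<^sup>2)"
begin

lemma mP: "(\<lambda>\<omega>. inner (\<phi> (X \<omega>)) h) \<in> borel_measurable M"
  by (rule borel_measurable_continuous_on[where f="\<lambda>x. inner x h"])
     (auto intro!: continuous_intros measurable_compose[OF Xm phim])

lemma intP2: "integrable M (\<lambda>\<omega>. inner (\<phi> (X \<omega>)) h * inner (\<phi> (X \<omega>)) k)"
proof (rule Bochner_Integration.integrable_bound)
  show "integrable M (\<lambda>\<omega>. (norm h * norm k) * (norm (\<phi> (X \<omega>)))\<^sup>2)"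
    using sq by simp
  show "(\<lambda>\<omega>. inner (\<phi> (X \<omega>)) h * inner (\<phi> (X \<omega>)) k) \<in> borel_measurable M"
    using mP[of h] mP[of k] by simp
  show "AE \<omega> in M. norm (inner (\<phi> (X \<omega>)) h * inner (\<phi> (X \<omega>)) k)
      \<le> norm ((norm h * norm k) * (norm (\<phi> (X \<omega>)))\<^sup>2)"
  proof (intro AE_I2)
    fix \<omega>
    have "\<bar>inner (\<phi> (X \<omega>)) h\<bar> * \<bar>inner (\<phi> (X \<omega>)) k\<bar> \<le> (norm (\<phi> (X \<omega>)) * norm h) * (norm (\<phi> (X \<omega>)) * norm k)"
      by (intro mult_mono Cauchy_Schwarz_ineq2) auto
    then show "norm (inner (\<phi> (X \<omega>)) h * inner (\<phi> (X \<omega>)) k)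
      \<le> norm ((norm h * norm k) * (norm (\<phi> (X \<omega>)))\<^sup>2)"
      by (simp add: abs_mult power2_eq_square algebra_simps)
  qed
qed

lemma intP: "integrable M (\<lambda>\<omega>. inner (\<phi> (X \<omega>)) h)"
proof (rule Bochner_Integration.integrable_bound)
  interpret prob_space M by (rule ps)
  show "integrable M (\<lambda>\<omega>. norm h * ((norm (\<phi> (X \<omega>)))\<^sup>2 + 1))"
    using sq by simp
  show "(\<lambda>\<omega>. inner (\<phi> (X \<omega>)) h) \<in> borel_measurable M" by (rule mP)
  show "AE \<omega> in M. norm (inner (\<phi> (X \<omega>)) h) \<le> norm (norm h * ((norm (\<phi> (X \<omega>)))\<^sup>2 + 1))"
  proof (intro AE_I2)
    fix \<omega>
    have a: "norm (\<phi> (X \<omega>)) \<le> (norm (\<phi> (X \<omega>)))\<^sup>2 + 1"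
    proof -
      have "0 \<le> (norm (\<phi> (X \<omega>)) - 1/2)\<^sup>2" by simp
      then show ?thesis by (simp add: power2_eq_square algebra_simps)
    qed
    have "\<bar>inner (\<phi> (X \<omega>)) h\<bar> \<le> norm (\<phi> (X \<omega>)) * norm h" by (rule Cauchy_Schwarz_ineq2)
    also have "\<dots> \<le> ((norm (\<phi> (X \<omega>)))\<^sup>2 + 1) * norm h" using a by (intro mult_right_mono) auto
    finally show "norm (inner (\<phi> (X \<omega>)) h) \<le> norm (norm h * ((norm (\<phi> (X \<omega>)))\<^sup>2 + 1))"
      by (simp add: mult.commute)
  qed
qed

lemma Sform: "Sigma_form M X \<phi> h k =
   integral\<^sup>L M (\<lambda>\<omega>. inner (\<phi> (X \<omega>)) h * inner (\<phi> (X \<omega>)) k)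
   - integral\<^sup>L M (\<lambda>\<omega>. inner (\<phi> (X \<omega>)) h) * integral\<^sup>L M (\<lambda>\<omega>. inner (\<phi> (X \<omega>)) k)"
proof -
  interpret prob_space M by (rule ps)
  define a where "a = integral\<^sup>L M (\<lambda>\<omega>. inner (\<phi> (X \<omega>)) h)"
  define b where "b = integral\<^sup>L M (\<lambda>\<omega>. inner (\<phi> (X \<omega>)) k)"
  have e: "(\<lambda>\<omega>. (inner (\<phi> (X \<omega>)) h - a) * (inner (\<phi> (X \<omega>)) k - b)) =
     (\<lambda>\<omega>. ((inner (\<phi> (X \<omega>)) h * inner (\<phi> (X \<omega>)) k - b * inner (\<phi> (X \<omega>)) h) - a * inner (\<phi> (X \<omega>)) k) + a * b)"
    by (auto simp: algebra_simps)
  have "Sigma_form M X \<phi> h k = integral\<^sup>L M (\<lambda>\<omega>. ((inner (\<phi> (X \<omega>)) h * inner (\<phi> (X \<omega>)) k - b * inner (\<phi> (X \<omega>)) h) - a * inner (\<phi> (X \<omega>)) k) + a * b)"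
    unfolding Sigma_form_def cov_def a_def[symmetric] b_def[symmetric] e ..
  also have "\<dots> = integral\<^sup>L M (\<lambda>\<omega>. inner (\<phi> (X \<omega>)) h * inner (\<phi> (X \<omega>)) k) - b * a - a * b + a * b"
    using intP2[of h k] intP[of h] intP[of k] prob_space
    by (simp add: integral_add integral_diff a_def b_def)
  finally show ?thesis by (simp add: a_def b_def mult.commute)
qed

lemma S_lin: "Sigma_form M X \<phi> (s *\<^sub>R h1 + t *\<^sub>R h2) k = s * Sigma_form M X \<phi> h1 k + t * Sigma_form M X \<phi> h2 k"
proof -
  have e1: "(\<lambda>\<omega>. inner (\<phi> (X \<omega>)) (s *\<^sub>R h1 + t *\<^sub>R h2) * inner (\<phi> (X \<omega>)) k) =
     (\<lambda>\<omega>. s * (inner (\<phi> (X \<omega>)) h1 * inner (\<phi> (X \<omega>)) k) + t * (inner (\<phi> (X \<omega>)) h2 * inner (\<phi> (X \<omega>)) k))"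
    by (auto simp: inner_add_right algebra_simps)
  have e2: "(\<lambda>\<omega>. inner (\<phi> (X \<omega>)) (s *\<^sub>R h1 + t *\<^sub>R h2)) =
     (\<lambda>\<omega>. s * inner (\<phi> (X \<omega>)) h1 + t * inner (\<phi> (X \<omega>)) h2)"
    by (auto simp: inner_add_right)
  show ?thesis unfolding Sform e1 e2
    using intP2[of h1 k] intP2[of h2 k] intP[of h1] intP[of h2]
    by (simp add: integral_add algebra_simps)
qed

lemma S_sym: "Sigma_form M X \<phi> h k = Sigma_form M X \<phi> k h"
  unfolding Sform by (simp add: mult.commute)

lemma S_nonneg: "0 \<le> Sigma_form M X \<phi> h h"
  unfolding Sigma_form_def cov_def by (intro Bochner_Integration.integral_nonneg) simp

lemma S_CS: "(Sigma_form M X \<phi> h k)\<^sup>2 \<le> Sigma_form M X \<phi> h h * Sigma_form M X \<phi> k k"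
proof (rule quad_disc)
  fix t :: real
  have "0 \<le> Sigma_form M X \<phi> (1 *\<^sub>R h + t *\<^sub>R k) (1 *\<^sub>R h + t *\<^sub>R k)" by (rule S_nonneg)
  also have "\<dots> = Sigma_form M X \<phi> h h + 2 * Sigma_form M X \<phi> h k * t + Sigma_form M X \<phi> k k * t\<^sup>2"
  proof -
    have e1: "Sigma_form M X \<phi> (1 *\<^sub>R h + t *\<^sub>R k) (1 *\<^sub>R h + t *\<^sub>R k)
       = 1 * Sigma_form M X \<phi> h (1 *\<^sub>R h + t *\<^sub>R k) + t * Sigma_form M X \<phi> k (1 *\<^sub>R h + t *\<^sub>R k)"
      by (rule S_lin)
    have e2: "Sigma_form M X \<phi> h (1 *\<^sub>R h + t *\<^sub>R k) = 1 * Sigma_form M X \<phi> h h + t * Sigma_form M X \<phi> k h"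
      by (subst S_sym) (rule S_lin)
    have e3: "Sigma_form M X \<phi> k (1 *\<^sub>R h + t *\<^sub>R k) = 1 * Sigma_form M X \<phi> h k + t * Sigma_form M X \<phi> k k"
      by (subst S_sym) (rule S_lin)
    have e4: "Sigma_form M X \<phi> k h = Sigma_form M X \<phi> h k" by (rule S_sym)
    show ?thesis unfolding e1 e2 e3 e4 by (simp add: power2_eq_square algebra_simps)
  qed
  finally show "0 \<le> Sigma_form M X \<phi> h h + 2 * Sigma_form M X \<phi> h k * t + Sigma_form M X \<phi> k k * t\<^sup>2" .
qed (rule S_nonneg)

lemma S_le: "Sigma_form M X \<phi> h h \<le> integral\<^sup>L M (\<lambda>\<omega>. (norm (\<phi> (X \<omega>)))\<^sup>2) * (norm h)\<^sup>2"
proof -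
  have "Sigma_form M X \<phi> h h \<le> integral\<^sup>L M (\<lambda>\<omega>. inner (\<phi> (X \<omega>)) h * inner (\<phi> (X \<omega>)) h)"
    unfolding Sform by simp
  also have "\<dots> \<le> integral\<^sup>L M (\<lambda>\<omega>. (norm h)\<^sup>2 * (norm (\<phi> (X \<omega>)))\<^sup>2)"
  proof (rule integral_mono)
    show "integrable M (\<lambda>\<omega>. (norm h)\<^sup>2 * (norm (\<phi> (X \<omega>)))\<^sup>2)" using sq by simp
    fix \<omega>
    have "\<bar>inner (\<phi> (X \<omega>)) h\<bar> \<le> norm (\<phi> (X \<omega>)) * norm h" by (rule Cauchy_Schwarz_ineq2)
    then have "\<bar>inner (\<phi> (X \<omega>)) h\<bar>\<^sup>2 \<le> (norm (\<phi> (X \<omega>)) * norm h)\<^sup>2"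
      by (intro power_mono) auto
    then show "inner (\<phi> (X \<omega>)) h * inner (\<phi> (X \<omega>)) h \<le> (norm h)\<^sup>2 * (norm (\<phi> (X \<omega>)))\<^sup>2"
      by (simp add: power2_eq_square algebra_simps)
  qed (rule intP2)
  finally show ?thesis by (simp add: mult.commute)
qed

lemma S_bl: "bounded_linear (\<lambda>h. Sigma_form M X \<phi> h u)"
proof (rule bounded_linear_intro)
  fix x y
  show "Sigma_form M X \<phi> (x + y) u = Sigma_form M X \<phi> x u + Sigma_form M X \<phi> y u"
    using S_lin[of 1 x 1 y u] by simp
next
  fix r x
  show "Sigma_form M X \<phi> (r *\<^sub>R x) u = r *\<^sub>R Sigma_form M X \<phi> x u"
    using S_lin[of r x 0 x u] by simp
next
  fix x
  define E where "E = integral\<^sup>L M (\<lambda>\<omega>. (norm (\<phi> (X \<omega>)))\<^sup>2)"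
  have E0: "0 \<le> E" unfolding E_def by (intro Bochner_Integration.integral_nonneg) simp
  have "(Sigma_form M X \<phi> x u)\<^sup>2 \<le> Sigma_form M X \<phi> x x * Sigma_form M X \<phi> u u" by (rule S_CS)
  also have "\<dots> \<le> (E * (norm x)\<^sup>2) * Sigma_form M X \<phi> u u"
    using S_le[of x] S_nonneg[of u] by (intro mult_right_mono) (auto simp: E_def)
  finally have "sqrt ((Sigma_form M X \<phi> x u)\<^sup>2) \<le> sqrt ((norm x)\<^sup>2 * (E * Sigma_form M X \<phi> u u))"
    by (intro real_sqrt_le_mono) (simp add: algebra_simps)
  then show "norm (Sigma_form M X \<phi> x u) \<le> norm x * sqrt (E * Sigma_form M X \<phi> u u)"
    by (simp add: real_sqrt_mult)
qed

lemma S_riesz: "\<exists>w. \<forall>h. Sigma_form M X \<phi> h u = inner h w"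
  by (rule riesz_repr[OF S_bl])

lemma var_cov: "prob_space.variance M f = cov M f f"
  unfolding cov_def by (simp add: power2_eq_square)

lemma rep_from_C:
  assumes reg: "regular TYPE('s) TYPE('z) M X MX \<phi>" and C: "psd_below_Sigma M X \<phi> C"
  shows "\<exists>(S::'a \<Rightarrow> 's) MSa (g::'x \<times> 's \<Rightarrow> 'z) MZa. representation M X MX S MSa g MZa \<and>
     (\<forall>h. var_cexp M X S g MZa (\<lambda>\<omega>. inner (\<phi> (X \<omega>)) h) = inner h (C h))"
proof -
  from reg C obtain S :: "'a \<Rightarrow> 's" and MSa and g :: "'x \<times> 's \<Rightarrow> 'z" and MZa where
    r: "representation M X MX S MSa g MZa" and c: "is_cov_op_cexp M X \<phi> S g MZa C"
    unfolding regular_def by blast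
  have "var_cexp M X S g MZa (\<lambda>\<omega>. inner (\<phi> (X \<omega>)) h) = inner h (C h)" for h
  proof -
    from c have "inner h (C h) = cov M (cexp M X S g MZa (\<lambda>\<omega>. inner (\<phi> (X \<omega>)) h))
        (cexp M X S g MZa (\<lambda>\<omega>. inner (\<phi> (X \<omega>)) h))"
      unfolding is_cov_op_cexp_def by blast
    then show ?thesis unfolding var_cexp_def var_cov by simp
  qed
  with r show ?thesis by blast
qed

lemma rep_rank1:
  assumes reg: "regular TYPE('s) TYPE('z) M X MX \<phi>" and N: "0 < Sigma_form M X \<phi> u u"
  shows "\<exists>(S::'a \<Rightarrow> 's) MSa (g::'x \<times> 's \<Rightarrow> 'z) MZa. representation M X MX S MSa g MZa \<and>
     (\<forall>h. var_cexp M X S g MZa (\<lambda>\<omega>. inner (\<phi> (X \<omega>)) h) = (Sigma_form M X \<phi> h u)\<^sup>2 / Sigma_form M X \<phi> u u)"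
proof -
  define n where "n = Sigma_form M X \<phi> u u"
  obtain w where w: "\<And>h. Sigma_form M X \<phi> h u = inner h w" using S_riesz[of u] by blast
  define C where "C = (\<lambda>k. inner k w *\<^sub>R (w /\<^sub>R n))"
  have hC: "inner h (C k) = inner h w * inner k w / n" for h k
    unfolding C_def by (simp add: inner_commute divide_inverse mult.commute mult.left_commute)
  have "psd_below_Sigma M X \<phi> C"
    unfolding psd_below_Sigma_def
  proof (intro conjI allI)
    show "bounded_linear C" unfolding C_def
      by (intro bounded_linear_compose[OF bounded_linear_scaleR_left bounded_linear_inner_left])
    fix h k show "inner h (C k) = inner (C h) k"
      by (simp add: hC inner_commute[of "C h" k])
  next
    fix h
    show "0 \<le> inner h (C h)" using N unfolding hC n_def by simp
    have "(Sigma_form M X \<phi> h u)\<^sup>2 \<le> Sigma_form M X \<phi> h h * n" unfolding n_def by (rule S_CS)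
    then have "(Sigma_form M X \<phi> h u)\<^sup>2 / n \<le> Sigma_form M X \<phi> h h"
      using N unfolding n_def by (simp add: divide_le_eq)
    then show "inner h (C h) \<le> Sigma_form M X \<phi> h h"
      unfolding hC w by (simp add: power2_eq_square)
  qed
  from rep_from_C[OF reg this] show ?thesis
    unfolding hC by (simp add: w n_def power2_eq_square)
qed

lemma rep_zero:
  assumes reg: "regular TYPE('s) TYPE('z) M X MX \<phi>"
  shows "\<exists>(S::'a \<Rightarrow> 's) MSa (g::'x \<times> 's \<Rightarrow> 'z) MZa. representation M X MX S MSa g MZa \<and>
     (\<forall>h. var_cexp M X S g MZa (\<lambda>\<omega>. inner (\<phi> (X \<omega>)) h) = 0)"
proof -
  have "psd_below_Sigma M X \<phi> (\<lambda>k. 0)"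
    unfolding psd_below_Sigma_def using S_nonneg by (simp add: bounded_linear_zero)
  from rep_from_C[OF reg this] show ?thesis by simp
qed

end
theorem theorem8:
  fixes M :: "'a measure" and X :: "'a \<Rightarrow> 'x" and MX :: "'x measure"
    and \<phi> :: "'x \<Rightarrow> 'h::{real_inner,complete_space}" and evl :: "'h \<Rightarrow> 'x \<Rightarrow> real"
    and a y :: 'h and A Y :: "'a \<Rightarrow> real"
  assumes "prob_space M"
    and "rkhs_feature evl \<phi>"
    and "X \<in> measurable M MX" and "\<phi> \<in> borel_measurable MX"
    and "integrable M (\<lambda>\<omega>. (norm (\<phi> (X \<omega>)))\<^sup>2)"
    and "\<And>\<omega>. Y \<omega> = inner (\<phi> (X \<omega>)) y"
    and "\<And>\<omega>. A \<omega> = inner (\<phi> (X \<omega>)) a"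
    and "y \<noteq> 0" and "a \<noteq> 0"
    and "prob_space.variance M Y > 0" and "prob_space.variance M A > 0"
    and "regular TYPE('s) TYPE('z) M X MX \<phi>"
  shows
    "(\<exists>(S::'a \<Rightarrow> 's) MSa (g::'x \<times> 's \<Rightarrow> 'z) MZa.
        representation M X MX S MSa g MZa \<and>
        var_cexp M X S g MZa A = 0 \<and>
        var_cexp M X S g MZa Y = prob_space.variance M Y * (1 - (corr M Y A)\<^sup>2))
     \<and>
     (\<exists>(S::'a \<Rightarrow> 's) MSa (g::'x \<times> 's \<Rightarrow> 'z) MZa.
        representation M X MX S MSa g MZa \<and>
        var_cexp M X S g MZa Y = prob_space.variance M Y \<and>
        var_cexp M X S g MZa A = prob_space.variance M A * (corr M Y A)\<^sup>2)
     \<and>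
     (\<forall>lam::real. lam \<ge> 0 \<longrightarrow>
       (\<exists>(S::'a \<Rightarrow> 's) MSa (g::'x \<times> 's \<Rightarrow> 'z) MZa.
          representation M X MX S MSa g MZa \<and>
          lam * var_cexp M X S g MZa A - var_cexp M X S g MZa Y =
            1/2 * (lam * prob_space.variance M A - prob_space.variance M Y
              - sqrt ((prob_space.variance M Y)\<^sup>2 + lam\<^sup>2 * (prob_space.variance M A)\<^sup>2
                      - 2 * lam * prob_space.variance M A * prob_space.variance M Y
                          * (2 * (corr M Y A)\<^sup>2 - 1)))))"
proof -
  note ps = assms(1) and Xm = assms(3) and phim = assms(4) and sq = assms(5)
  define Sf where "Sf = Sigma_form M X \<phi>"
  have lin: "Sf (s *\<^sub>R h1 + t *\<^sub>R h2) k = s * Sf h1 k + t * Sf h2 k" for s t h1 h2 k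
    unfolding Sf_def by (rule S_lin[OF ps Xm phim sq])
  have sym: "Sf h k = Sf k h" for h k unfolding Sf_def by (rule S_sym[OF ps Xm phim sq])
  have symlin: "Sf k (s *\<^sub>R h1 + t *\<^sub>R h2) = s * Sf h1 k + t * Sf h2 k" for s t h1 h2 k
    by (subst sym) (rule lin)
  have nn: "0 \<le> Sf h h" for h unfolding Sf_def by (rule S_nonneg[OF ps Xm phim sq])
  have cs: "(Sf h k)\<^sup>2 \<le> Sf h h * Sf k k" for h k unfolding Sf_def by (rule S_CS[OF ps Xm phim sq])
  note r1 = rep_rank1[OF ps Xm phim sq assms(12), folded Sf_def]
  note r0 = rep_zero[OF ps Xm phim sq assms(12)]
  have Yeq: "Y = (\<lambda>\<omega>. inner (\<phi> (X \<omega>)) y)" using assms(6) by auto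
  have Aeq: "A = (\<lambda>\<omega>. inner (\<phi> (X \<omega>)) a)" using assms(7) by auto
  define p where "p = Sf y y"
  define q where "q = Sf a a"
  define r where "r = Sf y a"
  have vY: "prob_space.variance M Y = p"
    unfolding p_def Sf_def Sigma_form_def cov_def Yeq by (simp add: power2_eq_square)
  have vA: "prob_space.variance M A = q"
    unfolding q_def Sf_def Sigma_form_def cov_def Aeq by (simp add: power2_eq_square)
  have pp: "0 < p" using assms(10) vY by simp
  have qp: "0 < q" using assms(11) vA by simp
  have cr: "corr M Y A = r / sqrt (p * q)"
    unfolding corr_def vY vA unfolding r_def Sf_def Sigma_form_def Yeq Aeq ..
  have rho2: "(corr M Y A)\<^sup>2 = r\<^sup>2 / (p * q)"
    unfolding cr using pp qp by (simp add: power_divide)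
  have csr: "r\<^sup>2 \<le> p * q" unfolding p_def q_def r_def by (rule cs)
  have ray: "Sf a y = r" unfolding r_def by (rule sym)
  show ?thesis
    unfolding vY vA rho2
    unfolding Yeq Aeq
  proof (intro conjI allI impI)
    define u where "u = 1 *\<^sub>R y + (- (r / q)) *\<^sub>R a"
    have ua: "Sf a u = 0" unfolding u_def symlin using qp by (simp add: q_def r_def)
    have uy: "Sf y u = p - r\<^sup>2 / q" unfolding u_def symlin
      by (simp add: p_def ray power2_eq_square)
    have uu: "Sf u u = p - r\<^sup>2 / q"
      by (subst (1) u_def) (simp only: lin ua uy, simp)
    have tgt: "p * (1 - r\<^sup>2 / (p * q)) = p - r\<^sup>2 / q" using pp qp by (simp add: field_simps)
    show "\<exists>(S::'a \<Rightarrow> 's) MSa (g::'x \<times> 's \<Rightarrow> 'z) MZa.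
        representation M X MX S MSa g MZa \<and>
        var_cexp M X S g MZa (\<lambda>\<omega>. inner (\<phi> (X \<omega>)) a) = 0 \<and>
        var_cexp M X S g MZa (\<lambda>\<omega>. inner (\<phi> (X \<omega>)) y) = p * (1 - r\<^sup>2 / (p * q))"
    proof (cases "0 < Sf u u")
      case True
      from r1[OF True] obtain S :: "'a \<Rightarrow> 's" and MSa and g :: "'x \<times> 's \<Rightarrow> 'z" and MZa where
        "representation M X MX S MSa g MZa" "\<And>h. var_cexp M X S g MZa (\<lambda>\<omega>. inner (\<phi> (X \<omega>)) h) = (Sf h u)\<^sup>2 / Sf u u"
        by blast
      then show ?thesis using True unfolding tgt
        by (intro exI[of _ S] exI[of _ MSa] exI[of _ g] exI[of _ MZa]) (simp add: ua uy uu power2_eq_square)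
    next
      case False
      then have "Sf u u = 0" using nn[of u] by simp
      then have z: "p - r\<^sup>2 / q = 0" using uu by simp
      from r0 show ?thesis unfolding tgt z by blast
    qed
  next
    from r1[of y] pp obtain S :: "'a \<Rightarrow> 's" and MSa and g :: "'x \<times> 's \<Rightarrow> 'z" and MZa where
      "representation M X MX S MSa g MZa" "\<And>h. var_cexp M X S g MZa (\<lambda>\<omega>. inner (\<phi> (X \<omega>)) h) = (Sf h y)\<^sup>2 / Sf y y"
      unfolding p_def by blast
    then show "\<exists>(S::'a \<Rightarrow> 's) MSa (g::'x \<times> 's \<Rightarrow> 'z) MZa.
        representation M X MX S MSa g MZa \<and>
        var_cexp M X S g MZa (\<lambda>\<omega>. inner (\<phi> (X \<omega>)) y) = p \<and>
        var_cexp M X S g MZa (\<lambda>\<omega>. inner (\<phi> (X \<omega>)) a) = q * (r\<^sup>2 / (p * q))"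
      using pp qp
      by (intro exI[of _ S] exI[of _ MSa] exI[of _ g] exI[of _ MZa])
         (simp add: ray flip: p_def, simp add: field_simps power2_eq_square)
  next
    fix lam :: real assume lam: "0 \<le> lam"
    define D where "D = (lam * q - p)\<^sup>2 + 4 * lam * (p * q - r\<^sup>2)"
    have D0: "0 \<le> D" unfolding D_def using lam csr by (intro add_nonneg_nonneg) auto
    define sD where "sD = sqrt D"
    have sD2: "sD\<^sup>2 = D" unfolding sD_def using D0 by simp
    have sD0: "0 \<le> sD" unfolding sD_def using D0 by simp
    define mu where "mu = ((lam * q - p) - sD) / 2"
    have char: "mu\<^sup>2 + (p - lam * q) * mu - lam * (p * q - r\<^sup>2) = 0"
      unfolding mu_def using sD2 unfolding D_def by (simp add: power2_eq_square field_simps)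
    have argeq: "p\<^sup>2 + lam\<^sup>2 * q\<^sup>2 - 2 * lam * q * p * (2 * (r\<^sup>2 / (p * q)) - 1) = D"
      unfolding D_def using pp qp by (simp add: field_simps power2_eq_square)
    have tgt: "1 / 2 * (lam * q - p - sqrt (p\<^sup>2 + lam\<^sup>2 * q\<^sup>2 - 2 * lam * q * p * (2 * (r\<^sup>2 / (p * q)) - 1))) = mu"
      unfolding argeq mu_def sD_def by simp
    define al where "al = mu - lam * q"
    define be where "be = lam * r"
    have lq: "0 \<le> lam * q" using lam qp by simp
    have alneg: "al < 0" unfolding al_def mu_def using pp sD0 lq by simp
    define u where "u = al *\<^sub>R y + be *\<^sub>R a"
    define sy where "sy = Sf y u"
    define sa where "sa = Sf a u"
    have sy_eq: "sy = al * p + be * r" unfolding sy_def u_def symlin by (simp add: p_def ray)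
    have sa_eq: "sa = al * r + be * q" unfolding sa_def u_def symlin by (simp add: q_def r_def)
    have N_eq: "Sf u u = al * sy + be * sa" by (subst (1) u_def) (simp only: lin sy_def sa_def)
    have sy2: "sy = - mu * al" unfolding sy_eq al_def be_def using char
      by (simp add: algebra_simps power2_eq_square)
    have sa2: "sa = mu * r" unfolding sa_eq al_def be_def by (simp add: algebra_simps)
    have key: "lam * sa\<^sup>2 - sy\<^sup>2 = mu * Sf u u"
      unfolding N_eq sy2 sa2 be_def by (simp add: algebra_simps power2_eq_square)
    show "\<exists>(S::'a \<Rightarrow> 's) MSa (g::'x \<times> 's \<Rightarrow> 'z) MZa.
          representation M X MX S MSa g MZa \<and>
          lam * var_cexp M X S g MZa (\<lambda>\<omega>. inner (\<phi> (X \<omega>)) a) - var_cexp M X S g MZa (\<lambda>\<omega>. inner (\<phi> (X \<omega>)) y) =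
            1 / 2 * (lam * q - p - sqrt (p\<^sup>2 + lam\<^sup>2 * q\<^sup>2 - 2 * lam * q * p * (2 * (r\<^sup>2 / (p * q)) - 1)))"
    proof (cases "0 < Sf u u")
      case True
      from r1[OF True] obtain S :: "'a \<Rightarrow> 's" and MSa and g :: "'x \<times> 's \<Rightarrow> 'z" and MZa where
        R: "representation M X MX S MSa g MZa" and V: "\<And>h. var_cexp M X S g MZa (\<lambda>\<omega>. inner (\<phi> (X \<omega>)) h) = (Sf h u)\<^sup>2 / Sf u u"
        by blast
      have "lam * ((Sf a u)\<^sup>2 / Sf u u) - (Sf y u)\<^sup>2 / Sf u u = (lam * sa\<^sup>2 - sy\<^sup>2) / Sf u u"
        unfolding sa_def sy_def by (simp add: diff_divide_distrib)
      also have "\<dots> = mu" unfolding key using True by simp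
      finally have fin: "lam * ((Sf a u)\<^sup>2 / Sf u u) - (Sf y u)\<^sup>2 / Sf u u = mu" .
      show ?thesis unfolding tgt using R V fin by (intro exI[of _ S] exI[of _ MSa] exI[of _ g] exI[of _ MZa]) simp
    next
      case False
      then have "Sf u u = 0" using nn[of u] by simp
      then have "sy\<^sup>2 \<le> 0" using cs[of y u] unfolding sy_def by simp
      then have "sy = 0" by simp
      then have "mu = 0" using sy2 alneg by simp
      then show ?thesis unfolding tgt using r0 by fastforce
    qed
  qed
qed

end
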